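(* Let $\mathcal L$ be a linearly ordered MV-algebra that has a discrete point. If $\mathcal F$ is a prime lattice filter of $\mathcal L$ with $\mathcal K(\mathcal F)=\{1\}$, then $\mathcal F$ is principal, i.e. $\mathcal F=\{x : x\ge p\}$ for some $p\in L$.
   Context: $\mathcal L=(L,\oplus,\lnot,0)$ is an MV-algebra, with $1=\lnot0$ and $x\to y=\lnot x\oplus y$. A discrete point is an element having an immediate successor or an immediate predecessor in the order. A lattice filter is a nonempty upward-closed subset closed under $\wedge$. It is prime if it is proper and $a\vee b\in\mathcal F$ implies $a\in\mathcal F$ or $b\in\mathcal F$. The kernel of $\mathcal F$ is $\mathcal K(\mathcal F)=\{z:\forall a\notin\mathcal F,\ z\to a\notin\mathcal F\}$. *)

theory Defs
  imports Main
begin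

definition mv_algebra :: "'a set \<Rightarrow> ('a \<Rightarrow> 'a \<Rightarrow> 'a) \<Rightarrow> ('a \<Rightarrow> 'a) \<Rightarrow> 'a \<Rightarrow> bool" where
  "mv_algebra L pl ng z \<longleftrightarrow>
     z \<in> L \<and>
     (\<forall>x\<in>L. \<forall>y\<in>L. pl x y \<in> L) \<and>
     (\<forall>x\<in>L. ng x \<in> L) \<and>
     (\<forall>x\<in>L. \<forall>y\<in>L. \<forall>w\<in>L. pl (pl x y) w = pl x (pl y w)) \<and>
     (\<forall>x\<in>L. \<forall>y\<in>L. pl x y = pl y x) \<and>
     (\<forall>x\<in>L. pl x z = x) \<and>
     (\<forall>x\<in>L. ng (ng x) = x) \<and>
     (\<forall>x\<in>L. pl x (ng z) = ng z) \<and>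
     (\<forall>x\<in>L. \<forall>y\<in>L. pl (ng (pl (ng x) y)) y = pl (ng (pl (ng y) x)) x)"

definition mv_one :: "('a \<Rightarrow> 'a) \<Rightarrow> 'a \<Rightarrow> 'a" where
  "mv_one ng z = ng z"

definition mv_imp :: "('a \<Rightarrow> 'a \<Rightarrow> 'a) \<Rightarrow> ('a \<Rightarrow> 'a) \<Rightarrow> 'a \<Rightarrow> 'a \<Rightarrow> 'a" where
  "mv_imp pl ng x y = pl (ng x) y"

definition mv_le :: "('a \<Rightarrow> 'a \<Rightarrow> 'a) \<Rightarrow> ('a \<Rightarrow> 'a) \<Rightarrow> 'a \<Rightarrow> 'a \<Rightarrow> 'a \<Rightarrow> bool" where
  "mv_le pl ng z x y \<longleftrightarrow> mv_imp pl ng x y = mv_one ng z"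

definition mv_less :: "('a \<Rightarrow> 'a \<Rightarrow> 'a) \<Rightarrow> ('a \<Rightarrow> 'a) \<Rightarrow> 'a \<Rightarrow> 'a \<Rightarrow> 'a \<Rightarrow> bool" where
  "mv_less pl ng z x y \<longleftrightarrow> mv_le pl ng z x y \<and> x \<noteq> y"

definition mv_join :: "('a \<Rightarrow> 'a \<Rightarrow> 'a) \<Rightarrow> ('a \<Rightarrow> 'a) \<Rightarrow> 'a \<Rightarrow> 'a \<Rightarrow> 'a" where
  "mv_join pl ng x y = pl (ng (pl (ng x) y)) y"

definition mv_meet :: "('a \<Rightarrow> 'a \<Rightarrow> 'a) \<Rightarrow> ('a \<Rightarrow> 'a) \<Rightarrow> 'a \<Rightarrow> 'a \<Rightarrow> 'a" where
  "mv_meet pl ng x y = ng (mv_join pl ng (ng x) (ng y))"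

definition mv_linear :: "'a set \<Rightarrow> ('a \<Rightarrow> 'a \<Rightarrow> 'a) \<Rightarrow> ('a \<Rightarrow> 'a) \<Rightarrow> 'a \<Rightarrow> bool" where
  "mv_linear L pl ng z \<longleftrightarrow> (\<forall>x\<in>L. \<forall>y\<in>L. mv_le pl ng z x y \<or> mv_le pl ng z y x)"

definition mv_covers :: "'a set \<Rightarrow> ('a \<Rightarrow> 'a \<Rightarrow> 'a) \<Rightarrow> ('a \<Rightarrow> 'a) \<Rightarrow> 'a \<Rightarrow> 'a \<Rightarrow> 'a \<Rightarrow> bool" where
  "mv_covers L pl ng z x y \<longleftrightarrow> mv_less pl ng z x y \<and>
     \<not> (\<exists>w\<in>L. mv_less pl ng z x w \<and> mv_less pl ng z w y)"

definition mv_discrete_point :: "'a set \<Rightarrow> ('a \<Rightarrow> 'a \<Rightarrow> 'a) \<Rightarrow> ('a \<Rightarrow> 'a) \<Rightarrow> 'a \<Rightarrow> 'a \<Rightarrow> bool" where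
  "mv_discrete_point L pl ng z x \<longleftrightarrow> x \<in> L \<and>
     ((\<exists>y\<in>L. mv_covers L pl ng z x y) \<or> (\<exists>y\<in>L. mv_covers L pl ng z y x))"

definition lattice_filter :: "'a set \<Rightarrow> ('a \<Rightarrow> 'a \<Rightarrow> 'a) \<Rightarrow> ('a \<Rightarrow> 'a) \<Rightarrow> 'a \<Rightarrow> 'a set \<Rightarrow> bool" where
  "lattice_filter L pl ng z F \<longleftrightarrow> F \<subseteq> L \<and> F \<noteq> {} \<and>
     (\<forall>x\<in>F. \<forall>y\<in>L. mv_le pl ng z x y \<longrightarrow> y \<in> F) \<and>
     (\<forall>x\<in>F. \<forall>y\<in>F. mv_meet pl ng x y \<in> F)"

definition prime_lattice_filter :: "'a set \<Rightarrow> ('a \<Rightarrow> 'a \<Rightarrow> 'a) \<Rightarrow> ('a \<Rightarrow> 'a) \<Rightarrow> 'a \<Rightarrow> 'a set \<Rightarrow> bool" where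
  "prime_lattice_filter L pl ng z F \<longleftrightarrow> lattice_filter L pl ng z F \<and> F \<noteq> L \<and>
     (\<forall>a\<in>L. \<forall>b\<in>L. mv_join pl ng a b \<in> F \<longrightarrow> a \<in> F \<or> b \<in> F)"

definition filter_kernel :: "'a set \<Rightarrow> ('a \<Rightarrow> 'a \<Rightarrow> 'a) \<Rightarrow> ('a \<Rightarrow> 'a) \<Rightarrow> 'a set \<Rightarrow> 'a set" where
  "filter_kernel L pl ng F = {w \<in> L. \<forall>a \<in> L - F. mv_imp pl ng w a \<notin> F}"

end

theory Submission
  imports Defs
begin

context
  fixes L :: "'a set" and pl :: "'a \<Rightarrow> 'a \<Rightarrow> 'a" and ng :: "'a \<Rightarrow> 'a" and z :: 'a
  assumes M: "mv_algebra L pl ng z"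
begin

lemma zL: "z \<in> L" using M unfolding mv_algebra_def by blast
lemma plL: "x \<in> L \<Longrightarrow> y \<in> L \<Longrightarrow> pl x y \<in> L" using M unfolding mv_algebra_def by blast
lemma ngL: "x \<in> L \<Longrightarrow> ng x \<in> L" using M unfolding mv_algebra_def by blast
lemma assoc: "x \<in> L \<Longrightarrow> y \<in> L \<Longrightarrow> w \<in> L \<Longrightarrow> pl (pl x y) w = pl x (pl y w)"
  using M unfolding mv_algebra_def by blast
lemma comm: "x \<in> L \<Longrightarrow> y \<in> L \<Longrightarrow> pl x y = pl y x" using M unfolding mv_algebra_def by blast
lemma plz: "x \<in> L \<Longrightarrow> pl x z = x" using M unfolding mv_algebra_def by blast
lemma nn: "x \<in> L \<Longrightarrow> ng (ng x) = x" using M unfolding mv_algebra_def by blast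
lemma pl1: "x \<in> L \<Longrightarrow> pl x (ng z) = ng z" using M unfolding mv_algebra_def by blast
lemma luk: "x \<in> L \<Longrightarrow> y \<in> L \<Longrightarrow> pl (ng (pl (ng x) y)) y = pl (ng (pl (ng y) x)) x"
  using M unfolding mv_algebra_def by blast

lemma zpl: "x \<in> L \<Longrightarrow> pl z x = x" using comm plz zL by metis
lemma n1: "ng (ng z) = z" using nn zL by blast
lemma nx_x: "x \<in> L \<Longrightarrow> pl (ng x) x = ng z"
proof -
  assume x: "x \<in> L"
  have "pl (ng (pl (ng x) (ng z))) (ng z) = pl (ng (pl (ng (ng z)) x)) x"
    using luk[OF x ngL[OF zL]] .
  moreover have "pl (ng (pl (ng x) (ng z))) (ng z) = ng z"
    using pl1 ngL x plL ngL zL by simp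
  moreover have "pl (ng (pl (ng (ng z)) x)) x = pl (ng x) x" using n1 zpl x by simp
  ultimately show ?thesis by simp
qed

lemma le_join: "x \<in> L \<Longrightarrow> y \<in> L \<Longrightarrow> mv_le pl ng z x y \<Longrightarrow> mv_join pl ng x y = y"
  unfolding mv_le_def mv_imp_def mv_one_def mv_join_def using n1 zpl by simp

lemma join_comm: "x \<in> L \<Longrightarrow> y \<in> L \<Longrightarrow> mv_join pl ng x y = mv_join pl ng y x"
  unfolding mv_join_def using luk by blast

lemma antisym: "x \<in> L \<Longrightarrow> y \<in> L \<Longrightarrow> mv_le pl ng z x y \<Longrightarrow> mv_le pl ng z y x \<Longrightarrow> x = y"
  using le_join join_comm by metis

lemma le_pl: "x \<in> L \<Longrightarrow> c \<in> L \<Longrightarrow> mv_le pl ng z x (pl x c)"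
  unfolding mv_le_def mv_imp_def mv_one_def
proof -
  assume x: "x \<in> L" and c: "c \<in> L"
  have "pl (ng x) (pl x c) = pl (pl (ng x) x) c" using assoc[OF ngL[OF x] x c] by simp
  also have "\<dots> = pl (ng z) c" using nx_x[OF x] by simp
  also have "\<dots> = ng z" using comm[OF ngL[OF zL] c] pl1[OF c] by simp
  finally show "pl (ng x) (pl x c) = ng z" .
qed

lemma mono: "a \<in> L \<Longrightarrow> d \<in> L \<Longrightarrow> e \<in> L \<Longrightarrow> mv_le pl ng z d e \<Longrightarrow> mv_le pl ng z (pl a d) (pl a e)"
proof -
  assume a: "a \<in> L" and d: "d \<in> L" and e: "e \<in> L" and le: "mv_le pl ng z d e"
  have "e = mv_join pl ng e d" using le_join[OF d e le] join_comm[OF d e] by simp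
  hence e1: "e = pl (ng (pl (ng e) d)) d" unfolding mv_join_def .
  define c where "c = ng (pl (ng e) d)"
  have cL: "c \<in> L" unfolding c_def using ngL plL d e by blast
  have "e = pl d c" using e1 comm[OF cL d] unfolding c_def by simp
  hence "pl a e = pl (pl a d) c" using assoc[OF a d cL] by simp
  moreover have "mv_le pl ng z (pl a d) (pl (pl a d) c)" using le_pl[OF plL[OF a d] cL] .
  ultimately show ?thesis by simp
qed

lemma join_x: "a \<in> L \<Longrightarrow> x \<in> L \<Longrightarrow> mv_le pl ng z a x \<Longrightarrow> pl a (ng (pl (ng x) a)) = x"
proof -
  assume a: "a \<in> L" and x: "x \<in> L" and le: "mv_le pl ng z a x"
  have "mv_join pl ng x a = x" using le_join[OF a x le] join_comm[OF a x] by simp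
  thus ?thesis unfolding mv_join_def using comm[OF a ngL[OF plL[OF ngL[OF x] a]]] by simp
qed

lemma nle: "a \<in> L \<Longrightarrow> b \<in> L \<Longrightarrow> mv_le pl ng z a b \<Longrightarrow> mv_le pl ng z (ng b) (ng a)"
  unfolding mv_le_def mv_imp_def using nn comm ngL by metis

lemma meet1: "a \<in> L \<Longrightarrow> b \<in> L \<Longrightarrow> mv_le pl ng z a b \<Longrightarrow> mv_meet pl ng a b = a"
proof -
  assume a: "a \<in> L" and b: "b \<in> L" and le: "mv_le pl ng z a b"
  have "mv_join pl ng (ng b) (ng a) = ng a" using le_join[OF ngL[OF b] ngL[OF a] nle[OF a b le]] .
  hence "mv_join pl ng (ng a) (ng b) = ng a" using join_comm[OF ngL[OF a] ngL[OF b]] by simp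
  thus ?thesis unfolding mv_meet_def using nn[OF a] by simp
qed
lemma meet2: "a \<in> L \<Longrightarrow> b \<in> L \<Longrightarrow> mv_le pl ng z b a \<Longrightarrow> mv_meet pl ng a b = b"
proof -
  assume a: "a \<in> L" and b: "b \<in> L" and le: "mv_le pl ng z b a"
  have "mv_join pl ng (ng a) (ng b) = ng b" using le_join[OF ngL[OF a] ngL[OF b] nle[OF b a le]] .
  thus ?thesis unfolding mv_meet_def using nn[OF b] by simp
qed

lemma meet_eq: "e \<in> L \<Longrightarrow> x \<in> L \<Longrightarrow> ng (pl (ng (pl x e)) x) = mv_meet pl ng e (ng x)"
  unfolding mv_meet_def mv_join_def using nn comm by simp

lemma dz: "x \<in> L \<Longrightarrow> y \<in> L \<Longrightarrow> ng (pl (ng y) x) = z \<Longrightarrow> mv_le pl ng z y x"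
  unfolding mv_le_def mv_imp_def mv_one_def using nn ngL plL by metis

lemma atom:
  assumes lin: "mv_linear L pl ng z" and x: "x \<in> L" and y: "y \<in> L"
    and cov: "mv_covers L pl ng z x y"
  shows "\<exists>d\<in>L. d \<noteq> z \<and> (\<forall>e\<in>L. e \<noteq> z \<longrightarrow> mv_le pl ng z d e)"
proof -
  have xy: "mv_le pl ng z x y" "x \<noteq> y" using cov unfolding mv_covers_def mv_less_def by auto
  define d where "d = ng (pl (ng y) x)"
  have dL: "d \<in> L" unfolding d_def using x y ngL plL by blast
  have dnz: "d \<noteq> z" using dz[OF x y] antisym[OF x y xy(1)] xy(2) unfolding d_def by blast
  have xd: "pl x d = y" unfolding d_def using join_x[OF x y xy(1)] .
  have "mv_le pl ng z d e" if e: "e \<in> L" and enz: "e \<noteq> z" for e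
  proof (rule ccontr)
    assume nde: "\<not> mv_le pl ng z d e"
    hence ed: "mv_le pl ng z e d" using lin dL e unfolding mv_linear_def by blast
    define w where "w = pl x e"
    have wL: "w \<in> L" unfolding w_def using x e plL by blast
    have xw: "mv_le pl ng z x w" unfolding w_def using le_pl x e by blast
    have wy: "mv_le pl ng z w y" unfolding w_def using mono[OF x e dL ed] xd by simp
    have "w = x \<or> w = y" using cov wL xw wy unfolding mv_covers_def mv_less_def by blast
    moreover have key: "ng (pl (ng w) x) = mv_meet pl ng e (ng x)"
      unfolding w_def using meet_eq e x by blast
    moreover {
      assume "w = y"
      hence dm: "d = mv_meet pl ng e (ng x)" using key unfolding d_def by simp
      have "mv_le pl ng z e (ng x) \<or> mv_le pl ng z (ng x) e"
        using lin e ngL x unfolding mv_linear_def by blast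
      hence False
      proof
        assume "mv_le pl ng z e (ng x)"
        hence "d = e" using meet1[OF e ngL[OF x]] dm by simp
        thus False using nde ed by simp
      next
        assume "mv_le pl ng z (ng x) e"
        hence "d = ng x" using meet2[OF e ngL[OF x]] dm by simp
        thus False using nde \<open>mv_le pl ng z (ng x) e\<close> by simp
      qed
    }
    moreover {
      assume "w = x"
      hence m0: "mv_meet pl ng e (ng x) = z" using key nx_x x n1 by simp
      have "mv_le pl ng z e (ng x) \<or> mv_le pl ng z (ng x) e"
        using lin e ngL x unfolding mv_linear_def by blast
      hence "ng x = z"
      proof
        assume "mv_le pl ng z e (ng x)"
        hence "e = z" using meet1[OF e ngL[OF x]] m0 by simp
        thus ?thesis using enz by simp
      next
        assume "mv_le pl ng z (ng x) e"
        thus ?thesis using meet2[OF e ngL[OF x]] m0 by simp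
      qed
      hence "x = ng z" using nn[OF x] by metis
      hence "y = x" using xy(1) unfolding mv_le_def mv_imp_def mv_one_def using n1 zpl y by simp
      hence False using xy(2) by simp
    }
    ultimately show False by blast
  qed
  thus ?thesis using dL dnz by blast
qed

end

theorem mainTheorem12:
  fixes L :: "'a set" and pl :: "'a \<Rightarrow> 'a \<Rightarrow> 'a" and ng :: "'a \<Rightarrow> 'a" and z :: 'a
    and F :: "'a set"
  assumes "mv_algebra L pl ng z"
    and "mv_linear L pl ng z"
    and "\<exists>d\<in>L. mv_discrete_point L pl ng z d"
    and "prime_lattice_filter L pl ng z F"
    and "filter_kernel L pl ng F = {mv_one ng z}"
  shows "\<exists>p\<in>L. F = {x \<in> L. mv_le pl ng z p x}"
proof (rule ccontr)
  note M = assms(1) and lin = assms(2)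
  assume np: "\<not> (\<exists>p\<in>L. F = {x \<in> L. mv_le pl ng z p x})"
  obtain x y where x: "x \<in> L" and y: "y \<in> L" and cov: "mv_covers L pl ng z x y"
    using assms(3) unfolding mv_discrete_point_def by blast
  obtain d where dL: "d \<in> L" and dnz: "d \<noteq> z" and at: "\<And>e. e \<in> L \<Longrightarrow> e \<noteq> z \<Longrightarrow> mv_le pl ng z d e"
    using atom[OF M lin x y cov] by blast
  have FL: "F \<subseteq> L" and up: "\<And>u v. u \<in> F \<Longrightarrow> v \<in> L \<Longrightarrow> mv_le pl ng z u v \<Longrightarrow> v \<in> F"
    using assms(4) unfolding prime_lattice_filter_def lattice_filter_def by blast+
  have "ng d \<in> filter_kernel L pl ng F"
    unfolding filter_kernel_def
  proof (intro CollectI conjI ballI)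
    show "ng d \<in> L" using ngL[OF M dL] .
    fix a assume aa: "a \<in> L - F"
    hence a: "a \<in> L" "a \<notin> F" by auto
    show "mv_imp pl ng (ng d) a \<notin> F"
    proof
      assume "mv_imp pl ng (ng d) a \<in> F"
      hence pF: "pl a d \<in> F" unfolding mv_imp_def using nn[OF M dL] comm[OF M] dL a by metis
      have pL: "pl a d \<in> L" using plL[OF M a(1) dL] .
      have "F = {x \<in> L. mv_le pl ng z (pl a d) x}"
      proof
        show "{x \<in> L. mv_le pl ng z (pl a d) x} \<subseteq> F" using up pF by blast
        show "F \<subseteq> {x \<in> L. mv_le pl ng z (pl a d) x}"
        proof
          fix u assume uF: "u \<in> F"
          have u: "u \<in> L" using uF FL by blast
          have au: "mv_le pl ng z a u"
            using lin a u uF up unfolding mv_linear_def by blast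
          have ne: "a \<noteq> u" using uF a by blast
          define e where "e = ng (pl (ng u) a)"
          have eL: "e \<in> L" unfolding e_def using ngL[OF M] plL[OF M] u a by blast
          have "e \<noteq> z" unfolding e_def using dz[OF M a(1) u] antisym[OF M a(1) u au] ne by blast
          hence "mv_le pl ng z d e" using at eL by blast
          hence "mv_le pl ng z (pl a d) (pl a e)" using mono[OF M a(1) dL eL] by blast
          moreover have "pl a e = u" unfolding e_def using join_x[OF M a(1) u au] .
          ultimately show "u \<in> {x \<in> L. mv_le pl ng z (pl a d) x}" using u by simp
        qed
      qed
      thus False using np pL by blast
    qed
  qed
  hence "ng d = ng z" using assms(5) unfolding mv_one_def by blast
  hence "d = z" using nn[OF M] dL zL[OF M] by metis
  thus False using dnz by simp
qed

end
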